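(* Let $\mathbb{F}$ be a field, $F\in M$ a non-zero inverse form, $(f,g)$ a viable ordered pair for $\mathcal{I}_F$, and $\Theta=\{\theta\in\mathcal{I}_F\cap\mathcal{L}: |\theta| \text{ is minimal}\}$. Then $\Theta=\{f\}$ if $|g|>|f|$, and otherwise $$\Theta=\{f\}\cup\{f+\psi g:\ \psi\in R \text{ a form with } |\psi|=|f|-|g|\}.$$
   Context: $R=\mathbb{F}[x,z]$, $M=\mathbb{F}[x^{-1},z^{-1}]$ with $R$-module structure $x^pz^q\circ x^{-u}z^{-v}=x^{p-u}z^{q-v}$ if $p\le u,q\le v$ and $0$ otherwise, extended bilinearly. An inverse form is a homogeneous element of $M$; $|\cdot|$ is total degree. $\mathcal{I}_F=\{\varphi\in R:\varphi\circ F=0\}$. $\mathcal{L}$ is the set of non-zero forms $\varphi\in R$ whose coefficient of $x^{|\varphi|}$ equals $1$. A viable ordered pair (VOP) for $\mathcal{I}_F$ is a pair $(f,g)$ of non-zero monic forms with $f\in\mathcal{L}$, $z\mid g$, $\mathcal{I}_F=\langle f,g\rangle$ and $|f|+|g|=2-|F|$. *)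

theory Defs
  imports "HOL-Library.Poly_Mapping" "HOL-Library.Product_Plus"
begin

text \<open>R = F[x,z]: a polynomial is a finitely supported map from exponent pairs (p,q)
  (standing for x^p z^q) to coefficients.  M = F[x^-1,z^-1]: an element is a finitely
  supported map from pairs (u,v) (standing for x^-u z^-v) to coefficients.\<close>

type_synonym 'a bipoly = "(nat \<times> nat) \<Rightarrow>\<^sub>0 'a"

definition xvar :: "'a::comm_ring_1 bipoly" where
  "xvar = Poly_Mapping.single (1, 0) 1"

definition zvar :: "'a::comm_ring_1 bipoly" where
  "zvar = Poly_Mapping.single (0, 1) 1"

text \<open>A (non-zero) form: a non-zero homogeneous element (all monomials of equal total degree).
  The same predicate is used for inverse forms in M.\<close>
definition is_form :: "'a::zero bipoly \<Rightarrow> bool" where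
  "is_form \<phi> \<longleftrightarrow> \<phi> \<noteq> 0 \<and> (\<exists>d. \<forall>k\<in>Poly_Mapping.keys \<phi>. fst k + snd k = d)"

definition fdeg :: "'a::zero bipoly \<Rightarrow> nat" where
  "fdeg \<phi> = Max ((\<lambda>k. fst k + snd k) ` Poly_Mapping.keys \<phi>)"

definition ideg :: "'a::zero bipoly \<Rightarrow> int" where
  "ideg F = - int (fdeg F)"

text \<open>The module action of R on M: coefficient of x^-a z^-b in phi o F.\<close>
definition contract :: "'a::comm_ring_1 bipoly \<Rightarrow> 'a bipoly \<Rightarrow> nat \<times> nat \<Rightarrow> 'a" where
  "contract \<phi> F = (\<lambda>(a, b). \<Sum>k\<in>Poly_Mapping.keys \<phi>. Poly_Mapping.lookup \<phi> k * Poly_Mapping.lookup F (a + fst k, b + snd k))"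

definition annihilator :: "'a::comm_ring_1 bipoly \<Rightarrow> 'a bipoly set" where
  "annihilator F = {\<phi>. contract \<phi> F = (\<lambda>_. 0)}"

definition Lset :: "'a::comm_ring_1 bipoly set" where
  "Lset = {\<phi>. is_form \<phi> \<and> Poly_Mapping.lookup \<phi> (fdeg \<phi>, 0) = 1}"

definition ideal2 :: "'a::comm_ring_1 bipoly \<Rightarrow> 'a bipoly \<Rightarrow> 'a bipoly set" where
  "ideal2 f g = {a * f + b * g | a b. True}"

text \<open>Monic form: leading coefficient 1 w.r.t. the lexicographic order with x > z, i.e. the
  coefficient of the monomial with the largest x-exponent is 1.\<close>
definition monic_form :: "'a::comm_ring_1 bipoly \<Rightarrow> bool" where
  "monic_form \<phi> \<longleftrightarrow> is_form \<phi> \<and>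
     (let m = Max (fst ` Poly_Mapping.keys \<phi>) in Poly_Mapping.lookup \<phi> (m, fdeg \<phi> - m) = 1)"

definition VOP :: "'a::comm_ring_1 bipoly \<Rightarrow> 'a bipoly \<Rightarrow> 'a bipoly \<Rightarrow> bool" where
  "VOP F f g \<longleftrightarrow> monic_form f \<and> monic_form g \<and> f \<in> Lset \<and> zvar dvd g \<and>
     annihilator F = ideal2 f g \<and> int (fdeg f) + int (fdeg g) = 2 - ideg F"

definition Theta :: "'a::comm_ring_1 bipoly \<Rightarrow> 'a bipoly set" where
  "Theta F = {\<theta> \<in> annihilator F \<inter> Lset.
               \<forall>\<theta>' \<in> annihilator F \<inter> Lset. fdeg \<theta> \<le> fdeg \<theta>'}"

end

theory Submission
  imports Defs
begin

abbreviation dg :: "nat \<times> nat \<Rightarrow> nat" where "dg k \<equiv> fst k + snd k"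

lemma dg_add: "dg (a + b) = dg a + dg b" by (simp add: fst_add snd_add)

lemma form_keys:
  assumes "is_form (\<phi>::'a::zero bipoly)" "k \<in> Poly_Mapping.keys \<phi>"
  shows "dg k = fdeg \<phi>"
proof -
  from assms(1) obtain d where d: "\<forall>k\<in>Poly_Mapping.keys \<phi>. dg k = d" unfolding is_form_def by blast
  have "(\<lambda>k. dg k) ` Poly_Mapping.keys \<phi> = {d}" using d assms(2) by (auto simp: image_iff)
  then have "fdeg \<phi> = d" unfolding fdeg_def by simp
  with d assms(2) show ?thesis by simp
qed

lemma formI:
  assumes "(\<phi>::'a::zero bipoly) \<noteq> 0" "\<forall>k\<in>Poly_Mapping.keys \<phi>. dg k = d"
  shows "is_form \<phi> \<and> fdeg \<phi> = d"
proof -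
  have ne: "Poly_Mapping.keys \<phi> \<noteq> {}" using assms(1) by simp
  have "(\<lambda>k. dg k) ` Poly_Mapping.keys \<phi> = {d}" using assms(2) ne
    by (auto simp: image_iff) (metis keys_eq_empty ex_in_conv prod.collapse)
  then show ?thesis using assms unfolding is_form_def fdeg_def by auto
qed

lemma keys_mult_ex:
  assumes "k \<in> Poly_Mapping.keys (p * q)"
  shows "\<exists>a\<in>Poly_Mapping.keys p. \<exists>b\<in>Poly_Mapping.keys q. k = a + b"
  using keys_mult[of p q] assms by blast

lemma keys_mult_dg:
  assumes "\<forall>a\<in>Poly_Mapping.keys p. dg a = i" "\<forall>b\<in>Poly_Mapping.keys (q::'a::field bipoly). dg b = j"
    "k \<in> Poly_Mapping.keys (p * q)"
  shows "dg k = i + j"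
  using keys_mult_ex[OF assms(3)] assms(1,2) dg_add by fastforce

definition hc :: "nat \<Rightarrow> 'a::field bipoly \<Rightarrow> 'a bipoly" where
  "hc j p = Poly_Mapping.mapp (\<lambda>k v. if dg k = j then v else 0) p"

lemma lookup_hc: "Poly_Mapping.lookup (hc j p) k = (if dg k = j then Poly_Mapping.lookup p k else 0)"
  unfolding hc_def lookup_mapp by (auto simp: when_def in_keys_iff)

lemma keys_hc: "k \<in> Poly_Mapping.keys (hc j p) \<Longrightarrow> dg k = j"
  by (auto simp: in_keys_iff lookup_hc split: if_splits)

lemma mult_comp:
  fixes p f :: "'a::field bipoly"
  assumes "is_form f" "dg k = N"
  shows "Poly_Mapping.lookup (p * f) k =
           (if fdeg f \<le> N then Poly_Mapping.lookup (hc (N - fdeg f) p * f) k else 0)"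
proof -
  have ex: "\<exists>a\<in>Poly_Mapping.keys q. dg k = dg a + fdeg f" if kq: "k \<in> Poly_Mapping.keys (q * f)" for q
  proof -
    obtain a b where "a\<in>Poly_Mapping.keys q" "b \<in> Poly_Mapping.keys f" "k = a + b"
      using keys_mult_ex[OF kq] by blast
    then show ?thesis using form_keys[OF assms(1)] dg_add by metis
  qed
  show ?thesis
  proof (cases "fdeg f \<le> N")
    case True
    define j where "j = N - fdeg f"
    have "Poly_Mapping.lookup ((p - hc j p) * f) k = 0"
    proof (rule ccontr)
      assume "Poly_Mapping.lookup ((p - hc j p) * f) k \<noteq> 0"
      then obtain a where a: "a \<in> Poly_Mapping.keys (p - hc j p)" "dg k = dg a + fdeg f"
        using ex by (meson in_keys_iff)
      then have "dg a = j" using assms(2) True j_def by simp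
      with a(1) show False by (simp add: in_keys_iff lookup_minus lookup_hc)
    qed
    moreover have "p * f = hc j p * f + (p - hc j p) * f" by (simp add: algebra_simps)
    ultimately show ?thesis using True j_def by (simp add: lookup_add)
  next
    case False
    show ?thesis
    proof (rule ccontr)
      assume "Poly_Mapping.lookup (p * f) k \<noteq> (if fdeg f \<le> N then Poly_Mapping.lookup (hc (N - fdeg f) p * f) k else 0)"
      then have "k \<in> Poly_Mapping.keys (p * f)" using False by (simp add: in_keys_iff)
      then show False using ex False assms(2) by fastforce
    qed
  qed
qed

lemma z_lemma:
  fixes q g :: "'a::field bipoly"
  assumes "zvar dvd g"
  shows "Poly_Mapping.lookup (q * g) (n, 0) = 0"
proof -
  obtain h where "g = zvar * h" using assms by (auto elim: dvdE)
  then have e: "q * g = zvar * (q * h)" by (simp add: algebra_simps)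
  have "(n, 0) \<notin> Poly_Mapping.keys (zvar * (q * h))"
  proof
    assume "(n, 0) \<in> Poly_Mapping.keys (zvar * (q * h))"
    then obtain a b where "a \<in> Poly_Mapping.keys (zvar :: 'a bipoly)" "(n,0) = a + b"
      using keys_mult_ex by blast
    then show False by (cases b) (auto simp: zvar_def)
  qed
  then show ?thesis using e by (simp add: in_keys_iff)
qed

lemma hc0: "hc 0 a = Poly_Mapping.single 0 (Poly_Mapping.lookup a 0)"
  by (rule poly_mapping_eqI) (auto simp: lookup_hc lookup_single when_def zero_prod_def)

lemma lookup_single0_mult: "Poly_Mapping.lookup (Poly_Mapping.single 0 c * f) k = c * Poly_Mapping.lookup (f::'a::field bipoly) k"
  by (simp add: mult_map_scale_conv_mult[symmetric] map.rep_eq when_def)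

lemma core:
  fixes f g \<theta> :: "'a::field bipoly"
  assumes f: "is_form f" "f \<in> Lset" and g: "is_form g" "zvar dvd g"
    and th: "\<theta> \<in> ideal2 f g" "\<theta> \<in> Lset"
  shows "fdeg f \<le> fdeg \<theta> \<and> (fdeg \<theta> = fdeg f \<longrightarrow> \<theta> = f \<or>
           (fdeg g \<le> fdeg f \<and> (\<exists>\<psi>. is_form \<psi> \<and> fdeg \<psi> = fdeg f - fdeg g \<and> \<theta> = f + \<psi> * g)))"
proof -
  obtain a b where ab: "\<theta> = a * f + b * g" using th(1) unfolding ideal2_def by blast
  define N where "N = fdeg \<theta>"
  define n where "n = fdeg f"
  define m where "m = fdeg g"
  have thf: "is_form \<theta>" and th1: "Poly_Mapping.lookup \<theta> (N, 0) = 1"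
    using th(2) unfolding Lset_def N_def by auto
  have f1: "Poly_Mapping.lookup f (n, 0) = 1" using f(2) unfolding Lset_def n_def by auto
  have lk: "Poly_Mapping.lookup \<theta> k =
      (if n \<le> N then Poly_Mapping.lookup (hc (N - n) a * f) k else 0) +
      (if m \<le> N then Poly_Mapping.lookup (hc (N - m) b * g) k else 0)" if "dg k = N" for k
    using mult_comp[OF f(1) that, of a] mult_comp[OF g(1) that, of b] ab n_def m_def
    by (simp add: lookup_add)
  have "n \<le> N"
  proof (rule ccontr)
    assume "\<not> n \<le> N"
    then have "Poly_Mapping.lookup \<theta> (N, 0) = 0" using lk[of "(N,0)"] z_lemma[OF g(2)] by simp
    with th1 show False by simp
  qed
  moreover have "\<theta> = f \<or> (m \<le> n \<and> (\<exists>\<psi>. is_form \<psi> \<and> fdeg \<psi> = n - m \<and> \<theta> = f + \<psi> * g))"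
    if NN: "N = n"
  proof -
    define c where "c = Poly_Mapping.lookup a 0"
    define \<psi> where "\<psi> = hc (n - m) b"
    define r where "r = Poly_Mapping.single 0 c * f + (if m \<le> n then \<psi> * g else 0)"
    have keysr: "dg k = n" if "k \<in> Poly_Mapping.keys r" for k
    proof -
      have "k \<in> Poly_Mapping.keys (Poly_Mapping.single 0 c * f) \<or> (m \<le> n \<and> k \<in> Poly_Mapping.keys (\<psi> * g))"
        using that keys_add[of "Poly_Mapping.single 0 c * f"] unfolding r_def by (auto split: if_splits)
      moreover have "dg k = 0 + n" if "k \<in> Poly_Mapping.keys (Poly_Mapping.single 0 c * f)"
        by (rule keys_mult_dg[OF _ _ that]) (auto simp: form_keys[OF f(1)] n_def split: if_splits)
      moreover have "dg k = (n - m) + m" if "k \<in> Poly_Mapping.keys (\<psi> * g)"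
        by (rule keys_mult_dg[OF _ _ that]) (auto simp: form_keys[OF g(1)] m_def \<psi>_def keys_hc)
      ultimately show ?thesis by auto
    qed
    have "\<theta> = r"
    proof (rule poly_mapping_eqI)
      fix k
      show "Poly_Mapping.lookup \<theta> k = Poly_Mapping.lookup r k"
      proof (cases "dg k = n")
        case True
        then show ?thesis using lk[of k] NN hc0[of a] unfolding r_def \<psi>_def c_def
          by (simp add: lookup_add)
      next
        case False
        then have "k \<notin> Poly_Mapping.keys \<theta>" "k \<notin> Poly_Mapping.keys r"
          using form_keys[OF thf] NN N_def keysr by auto
        then show ?thesis by (simp add: in_keys_iff)
      qed
    qed
    have "Poly_Mapping.lookup r (n, 0) = c"
      unfolding r_def using z_lemma[OF g(2), of \<psi> n] f1
      by (simp add: lookup_add lookup_single0_mult)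
    then have "c = 1" using th1 NN \<open>\<theta> = r\<close> by simp
    then have r: "r = f + (if m \<le> n then \<psi> * g else 0)" unfolding r_def by simp
    show ?thesis
    proof (cases "m \<le> n \<and> \<psi> \<noteq> 0")
      case True
      have "is_form \<psi> \<and> fdeg \<psi> = n - m"
        by (rule formI) (use True keys_hc \<psi>_def in auto)
      then show ?thesis using True r \<open>\<theta> = r\<close> by auto
    next
      case False
      then show ?thesis using r \<open>\<theta> = r\<close> by auto
    qed
  qed
  ultimately show ?thesis using N_def n_def m_def by auto
qed

lemma conv:
  fixes f g \<psi> :: "'a::field bipoly"
  assumes f: "is_form f" "f \<in> Lset" and g: "is_form g" "zvar dvd g"
    and le: "fdeg g \<le> fdeg f" and psi: "is_form \<psi>" "fdeg \<psi> = fdeg f - fdeg g"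
  shows "f + \<psi> * g \<in> Lset \<and> fdeg (f + \<psi> * g) = fdeg f \<and> f + \<psi> * g \<in> ideal2 f g"
proof -
  have f1: "Poly_Mapping.lookup f (fdeg f, 0) = 1" using f(2) unfolding Lset_def by auto
  have l1: "Poly_Mapping.lookup (f + \<psi> * g) (fdeg f, 0) = 1"
    unfolding lookup_add f1 z_lemma[OF g(2), of \<psi> "fdeg f"] by simp
  have ne: "f + \<psi> * g \<noteq> 0" using l1 by (metis lookup_zero zero_neq_one)
  have "\<forall>k\<in>Poly_Mapping.keys (f + \<psi> * g). dg k = fdeg f"
  proof
    fix k assume "k \<in> Poly_Mapping.keys (f + \<psi> * g)"
    then have "k \<in> Poly_Mapping.keys f \<or> k \<in> Poly_Mapping.keys (\<psi> * g)" using keys_add[of f "\<psi> * g"] by blast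
    moreover have "dg k = (fdeg f - fdeg g) + fdeg g" if "k \<in> Poly_Mapping.keys (\<psi> * g)"
      by (rule keys_mult_dg[OF _ _ that]) (auto simp: form_keys[OF g(1)] form_keys[OF psi(1)] psi(2))
    ultimately show "dg k = fdeg f" using form_keys[OF f(1)] le by auto
  qed
  from formI[OF ne this] have "is_form (f + \<psi> * g)" "fdeg (f + \<psi> * g) = fdeg f" by auto
  moreover have "f + \<psi> * g \<in> ideal2 f g" unfolding ideal2_def
    by (rule CollectI, rule exI[of _ 1], rule exI[of _ \<psi>]) simp
  ultimately show ?thesis using l1 unfolding Lset_def by auto
qed

theorem corollary3:
  fixes F f g :: "'a::field bipoly"
  assumes "is_form F"
    and "VOP F f g"
  shows "(fdeg g > fdeg f \<longrightarrow> Theta F = {f}) \<and>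
         (\<not> fdeg g > fdeg f \<longrightarrow>
            Theta F = {f} \<union> {f + \<psi> * g | \<psi>. is_form \<psi> \<and> fdeg \<psi> = fdeg f - fdeg g})"
proof -
  have mf: "monic_form f" "monic_form g" and fL: "f \<in> Lset" and zg: "zvar dvd g"
    and I: "annihilator F = ideal2 f g" using assms(2) unfolding VOP_def by auto
  have ff: "is_form f" and gf: "is_form g" using mf unfolding monic_form_def by auto
  have fI: "f \<in> ideal2 f g" unfolding ideal2_def
    by (rule CollectI, rule exI[of _ 1], rule exI[of _ 0]) simp
  note cr = core[OF ff fL gf zg]
  have T: "Theta F = {\<theta> \<in> ideal2 f g \<inter> Lset. fdeg \<theta> = fdeg f}"
  proof (intro set_eqI iffI)
    fix \<theta> assume h: "\<theta> \<in> Theta F"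
    then have m: "\<theta> \<in> ideal2 f g" "\<theta> \<in> Lset" using I unfolding Theta_def by auto
    have "fdeg \<theta> \<le> fdeg f" using h fI fL I unfolding Theta_def by auto
    moreover have "fdeg f \<le> fdeg \<theta>" using cr[OF m] by (rule conjunct1)
    ultimately show "\<theta> \<in> {\<theta> \<in> ideal2 f g \<inter> Lset. fdeg \<theta> = fdeg f}" using m by simp
  next
    fix \<theta> assume h: "\<theta> \<in> {\<theta> \<in> ideal2 f g \<inter> Lset. fdeg \<theta> = fdeg f}"
    have "fdeg \<theta> \<le> fdeg \<theta>'" if "\<theta>' \<in> annihilator F \<inter> Lset" for \<theta>'
    proof -
      have "\<theta>' \<in> ideal2 f g" "\<theta>' \<in> Lset" using that I by auto
      from cr[OF this] have "fdeg f \<le> fdeg \<theta>'" by (rule conjunct1)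
      then show ?thesis using h by simp
    qed
    then show "\<theta> \<in> Theta F" using h I unfolding Theta_def by blast
  qed
  have A: "{\<theta> \<in> ideal2 f g \<inter> Lset. fdeg \<theta> = fdeg f} \<subseteq>
      {f} \<union> {f + \<psi> * g | \<psi>. is_form \<psi> \<and> fdeg \<psi> = fdeg f - fdeg g \<and> fdeg g \<le> fdeg f}"
  proof
    fix \<theta> assume h: "\<theta> \<in> {\<theta> \<in> ideal2 f g \<inter> Lset. fdeg \<theta> = fdeg f}"
    then have "\<theta> = f \<or> (fdeg g \<le> fdeg f \<and> (\<exists>\<psi>. is_form \<psi> \<and> fdeg \<psi> = fdeg f - fdeg g \<and> \<theta> = f + \<psi> * g))"
      using cr[of \<theta>] by simp
    then show "\<theta> \<in> {f} \<union> {f + \<psi> * g | \<psi>. is_form \<psi> \<and> fdeg \<psi> = fdeg f - fdeg g \<and> fdeg g \<le> fdeg f}"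
      by blast
  qed
  have B: "{f} \<union> {f + \<psi> * g | \<psi>. is_form \<psi> \<and> fdeg \<psi> = fdeg f - fdeg g \<and> fdeg g \<le> fdeg f}
      \<subseteq> {\<theta> \<in> ideal2 f g \<inter> Lset. fdeg \<theta> = fdeg f}"
  proof
    fix \<theta> assume "\<theta> \<in> {f} \<union> {f + \<psi> * g | \<psi>. is_form \<psi> \<and> fdeg \<psi> = fdeg f - fdeg g \<and> fdeg g \<le> fdeg f}"
    then consider "\<theta> = f" | \<psi> where "is_form \<psi>" "fdeg \<psi> = fdeg f - fdeg g" "fdeg g \<le> fdeg f" "\<theta> = f + \<psi> * g"
      by blast
    then show "\<theta> \<in> {\<theta> \<in> ideal2 f g \<inter> Lset. fdeg \<theta> = fdeg f}"
    proof cases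
      case 1 then show ?thesis using fI fL by simp
    next
      case (2 \<psi>) then show ?thesis using conv[OF ff fL gf zg, of \<psi>] by simp
    qed
  qed
  from A B T have E: "Theta F = {f} \<union> {f + \<psi> * g | \<psi>. is_form \<psi> \<and> fdeg \<psi> = fdeg f - fdeg g \<and> fdeg g \<le> fdeg f}"
    by blast
  have "fdeg f < fdeg g \<Longrightarrow> Theta F = {f}" unfolding E by (simp add: not_le[symmetric])
  moreover have "\<not> fdeg f < fdeg g \<Longrightarrow> Theta F = {f} \<union> {f + \<psi> * g | \<psi>. is_form \<psi> \<and> fdeg \<psi> = fdeg f - fdeg g}"
    unfolding E by simp
  ultimately show ?thesis by blast
qed

end
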